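(* Let $R$ be a ring such that whenever $a,b\in R$ satisfy $a+b=1$, there exist $r,s\in R$ with $(1+ar)R(1+bs)\subseteq J(R)$. Then $R$ is feckly clean if and only if $\operatorname{Max}(R)$ is strongly zero-dimensional.
   Context: Rings are associative with identity, not necessarily commutative; ideals are two-sided; $J(R)$ is the Jacobson radical. An element $u\in R$ is full if $RuR=R$. An element $a\in R$ is feckly clean if there exist $e\in R$ and a full element $u\in R$ with $a=e+u$ and $eR(1-e)\subseteq J(R)$; $R$ is feckly clean if every element is feckly clean. $\operatorname{Max}(R)$ is the set of all maximal ideals of $R$, topologized so that the closed sets are exactly the sets $V(I)=\{P\in\operatorname{Max}(R): I\subseteq P\}$ for ideals $I$. A topological space $X$ is strongly zero-dimensional if for any two disjoint closed sets $A,B\subseteq X$ there exist disjoint clopen sets $C_1,C_2$ with $A\subseteq C_1$ and $B\subseteq C_2$. *)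

theory Defs
  imports Main
begin

text \<open>Rings: type class ring_1 (associative, with identity, not necessarily commutative).
  The ring R is the whole type.\<close>

definition left_ideal :: "'a::ring_1 set \<Rightarrow> bool" where
  "left_ideal I \<longleftrightarrow> 0 \<in> I \<and> (\<forall>x\<in>I. \<forall>y\<in>I. x + y \<in> I) \<and> (\<forall>x\<in>I. - x \<in> I)
     \<and> (\<forall>r x. x \<in> I \<longrightarrow> r * x \<in> I)"

definition two_sided_ideal :: "'a::ring_1 set \<Rightarrow> bool" where
  "two_sided_ideal I \<longleftrightarrow> 0 \<in> I \<and> (\<forall>x\<in>I. \<forall>y\<in>I. x + y \<in> I) \<and> (\<forall>x\<in>I. - x \<in> I)
     \<and> (\<forall>r x. x \<in> I \<longrightarrow> r * x \<in> I \<and> x * r \<in> I)"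

definition maximal_left_ideal :: "'a::ring_1 set \<Rightarrow> bool" where
  "maximal_left_ideal M \<longleftrightarrow> left_ideal M \<and> M \<noteq> UNIV \<and>
     (\<forall>I. left_ideal I \<and> M \<subseteq> I \<and> I \<noteq> UNIV \<longrightarrow> I = M)"

definition maximal_ideal :: "'a::ring_1 set \<Rightarrow> bool" where
  "maximal_ideal M \<longleftrightarrow> two_sided_ideal M \<and> M \<noteq> UNIV \<and>
     (\<forall>I. two_sided_ideal I \<and> M \<subseteq> I \<and> I \<noteq> UNIV \<longrightarrow> I = M)"

definition jacobson :: "'a::ring_1 set" where
  "jacobson = \<Inter> {M. maximal_left_ideal M}"

definition RuR :: "'a::ring_1 \<Rightarrow> 'a set" where
  "RuR u = {x. \<exists>(n::nat) r s. x = (\<Sum>i<n. r i * u * s i)}"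

definition full :: "'a::ring_1 \<Rightarrow> bool" where
  "full u \<longleftrightarrow> RuR u = UNIV"

definition feckly_clean_elem :: "'a::ring_1 \<Rightarrow> bool" where
  "feckly_clean_elem a \<longleftrightarrow> (\<exists>e u. a = e + u \<and> full u \<and>
       (\<forall>r. e * r * (1 - e) \<in> (jacobson :: 'a set)))"

definition feckly_clean_ring :: "'a::ring_1 itself \<Rightarrow> bool" where
  "feckly_clean_ring _ \<longleftrightarrow> (\<forall>a::'a. feckly_clean_elem a)"

definition MaxSpec :: "'a::ring_1 set set" where
  "MaxSpec = {M. maximal_ideal M}"

definition Vset :: "'a::ring_1 set \<Rightarrow> 'a set set" where
  "Vset I = {P \<in> MaxSpec. I \<subseteq> P}"

definition max_closed :: "'a::ring_1 set set \<Rightarrow> bool" where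
  "max_closed A \<longleftrightarrow> (\<exists>I. two_sided_ideal I \<and> A = Vset I)"

definition max_clopen :: "'a::ring_1 set set \<Rightarrow> bool" where
  "max_clopen C \<longleftrightarrow> max_closed C \<and> max_closed (MaxSpec - C)"

definition Max_strongly_zero_dim :: "'a::ring_1 itself \<Rightarrow> bool" where
  "Max_strongly_zero_dim _ \<longleftrightarrow>
     (\<forall>A B :: 'a set set. max_closed A \<and> max_closed B \<and> A \<inter> B = {} \<longrightarrow>
        (\<exists>C1 C2. max_clopen C1 \<and> max_clopen C2 \<and> C1 \<inter> C2 = {} \<and> A \<subseteq> C1 \<and> B \<subseteq> C2))"

end

theory Submission
  imports Defs
begin

lemma RuR_I: "x = (\<Sum>i<(n::nat). r i * u * s i) \<Longrightarrow> x \<in> RuR u"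
  unfolding RuR_def by blast

lemma RuR_zero: "0 \<in> RuR u"
  unfolding RuR_def by (rule CollectI, rule exI[of _ 0]) simp

lemma RuR_mem: "u \<in> RuR u"
  unfolding RuR_def by (rule CollectI, rule exI[of _ 1], rule exI[of _ "\<lambda>_. 1"], rule exI[of _ "\<lambda>_. 1"]) simp

lemma RuR_snoc:
  assumes "x \<in> RuR u" shows "x + a * u * b \<in> RuR u"
proof -
  obtain n :: nat and r s where x: "x = (\<Sum>i<n. r i * u * s i)" using assms unfolding RuR_def by blast
  have "(\<Sum>i<Suc n. (r(n:=a)) i * u * (s(n:=b)) i) = (\<Sum>i<n. r i * u * s i) + a * u * b"
    by (simp add: lessThan_Suc)
  then show ?thesis unfolding x by (rule RuR_I[OF sym])
qed

lemma RuR_add: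
  assumes "x \<in> RuR u" "y \<in> RuR u" shows "x + y \<in> RuR u"
proof -
  obtain m :: nat and r s where y: "y = (\<Sum>i<m. r i * u * s i)" using assms(2) unfolding RuR_def by blast
  have "x + (\<Sum>i<m. r i * u * s i) \<in> RuR u" for m
  proof (induction m)
    case 0 then show ?case using assms(1) by simp
  next
    case (Suc m)
    have "x + (\<Sum>i<Suc m. r i * u * s i) = (x + (\<Sum>i<m. r i * u * s i)) + r m * u * s m"
      by (simp add: lessThan_Suc add.assoc)
    then show ?case using RuR_snoc[OF Suc, of "r m" "s m"] by (simp add: add.assoc)
  qed
  then show ?thesis using y by simp
qed

lemma RuR_neg: assumes "x \<in> RuR u" shows "- x \<in> RuR u"
proof -
  obtain n :: nat and r s where x: "x = (\<Sum>i<n. r i * u * s i)" using assms unfolding RuR_def by blast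
  have "- x = (\<Sum>i<n. (\<lambda>i. - r i) i * u * s i)" unfolding x by (simp add: sum_negf)
  then show ?thesis by (rule RuR_I)
qed

lemma RuR_lmult: assumes "x \<in> RuR u" shows "t * x \<in> RuR u"
proof -
  obtain n :: nat and r s where x: "x = (\<Sum>i<n. r i * u * s i)" using assms unfolding RuR_def by blast
  have "t * x = (\<Sum>i<n. (\<lambda>i. t * r i) i * u * s i)" unfolding x by (simp add: sum_distrib_left mult.assoc)
  then show ?thesis by (rule RuR_I)
qed

lemma RuR_rmult: assumes "x \<in> RuR u" shows "x * t \<in> RuR u"
proof -
  obtain n :: nat and r s where x: "x = (\<Sum>i<n. r i * u * s i)" using assms unfolding RuR_def by blast
  have "x * t = (\<Sum>i<n. r i * u * (\<lambda>i. s i * t) i)" unfolding x by (simp add: sum_distrib_right mult.assoc)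
  then show ?thesis by (rule RuR_I)
qed

lemma RuR_ideal: "two_sided_ideal (RuR u)"
  unfolding two_sided_ideal_def by (intro conjI ballI allI impI RuR_zero RuR_add RuR_neg RuR_lmult RuR_rmult)

lemma ideal_sum_mem:
  fixes n :: nat
  assumes "two_sided_ideal I" "\<And>i. i < n \<Longrightarrow> f i \<in> I" shows "(\<Sum>i<n. f i) \<in> I"
  using assms(2) proof (induction n)
  case 0 then show ?case using assms(1) by (simp add: two_sided_ideal_def)
next
  case (Suc n) then show ?case using assms(1) by (simp add: two_sided_ideal_def lessThan_Suc)
qed

lemma RuR_sub: assumes "two_sided_ideal P" "u \<in> P" shows "RuR u \<subseteq> P"
proof
  fix x assume "x \<in> RuR u"
  then obtain n :: nat and r s where x: "x = (\<Sum>i<n. r i * u * s i)" unfolding RuR_def by blast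
  have "r i * u * s i \<in> P" for i using assms by (simp add: two_sided_ideal_def)
  then show "x \<in> P" unfolding x by (intro ideal_sum_mem[OF assms(1)])
qed

lemma ideal_lm: "two_sided_ideal I \<Longrightarrow> x \<in> I \<Longrightarrow> t * x \<in> I"
  unfolding two_sided_ideal_def by blast
lemma ideal_rm: "two_sided_ideal I \<Longrightarrow> x \<in> I \<Longrightarrow> x * t \<in> I"
  unfolding two_sided_ideal_def by blast
lemma ideal_add: "two_sided_ideal I \<Longrightarrow> x \<in> I \<Longrightarrow> y \<in> I \<Longrightarrow> x + y \<in> I"
  unfolding two_sided_ideal_def by blast
lemma ideal_neg: "two_sided_ideal I \<Longrightarrow> x \<in> I \<Longrightarrow> - x \<in> I"
  unfolding two_sided_ideal_def by blast

lemma ideal_UNIV: assumes "two_sided_ideal I" "1 \<in> I" shows "I = UNIV"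
proof -
  have "1 * x \<in> I" for x using ideal_rm[OF assms] .
  then show ?thesis by auto
qed

lemma ideal_diff: assumes "two_sided_ideal I" "x \<in> I" "y \<in> I" shows "x - y \<in> I"
proof -
  have "x + - y \<in> I" using ideal_add[OF assms(1) assms(2) ideal_neg[OF assms(1,3)]] .
  then show ?thesis by simp
qed

definition isum :: "'a::ring_1 set \<Rightarrow> 'a set \<Rightarrow> 'a set" where
  "isum I K = {p + q | p q. p \<in> I \<and> q \<in> K}"

lemma isum_ideal: assumes "two_sided_ideal I" "two_sided_ideal K" shows "two_sided_ideal (isum I K)"
  unfolding two_sided_ideal_def isum_def
proof (intro conjI allI ballI impI)
  have "(0::'a) = 0 + 0" by simp
  moreover have "(0::'a) \<in> I" "(0::'a) \<in> K" using assms unfolding two_sided_ideal_def by blast+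
  ultimately show "0 \<in> {p + q |p q. p \<in> I \<and> q \<in> K}" by blast
next
  fix x y assume "x \<in> {p + q |p q. p \<in> I \<and> q \<in> K}" "y \<in> {p + q |p q. p \<in> I \<and> q \<in> K}"
  then obtain p q p' q' where "x = p + q" "y = p' + q'" "p \<in> I" "q \<in> K" "p' \<in> I" "q' \<in> K" by blast
  moreover have "x + y = (p + p') + (q + q')" using calculation by (simp add: algebra_simps)
  ultimately show "x + y \<in> {p + q |p q. p \<in> I \<and> q \<in> K}" using assms ideal_add by blast
next
  fix x assume "x \<in> {p + q |p q. p \<in> I \<and> q \<in> K}"
  then obtain p q where "x = p + q" "p \<in> I" "q \<in> K" by blast
  moreover have "- x = (- p) + (- q)" using calculation by (simp add: algebra_simps)
  ultimately show "- x \<in> {p + q |p q. p \<in> I \<and> q \<in> K}" using assms unfolding two_sided_ideal_def by blast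
next
  fix r x assume "x \<in> {p + q |p q. p \<in> I \<and> q \<in> K}"
  then obtain p q where "x = p + q" "p \<in> I" "q \<in> K" by blast
  moreover have "r * x = r * p + r * q" "x * r = p * r + q * r" using calculation by (simp_all add: algebra_simps)
  ultimately show "r * x \<in> {p + q |p q. p \<in> I \<and> q \<in> K}" "x * r \<in> {p + q |p q. p \<in> I \<and> q \<in> K}"
    using assms unfolding two_sided_ideal_def by blast+
qed

lemma isum_sub1: assumes "two_sided_ideal K" shows "I \<subseteq> isum I K"
proof
  fix p assume "p \<in> I"
  moreover have "p = p + 0" by simp
  moreover have "0 \<in> K" using assms unfolding two_sided_ideal_def by blast
  ultimately show "p \<in> isum I K" unfolding isum_def by blast
qed
lemma isum_sub2: assumes "two_sided_ideal I" shows "K \<subseteq> isum I K"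
proof
  fix p assume "p \<in> K"
  moreover have "p = 0 + p" by simp
  moreover have "0 \<in> I" using assms unfolding two_sided_ideal_def by blast
  ultimately show "p \<in> isum I K" unfolding isum_def by blast
qed

section \<open>Zorn\<close>

lemma max_ideal_exists:
  assumes "two_sided_ideal I" "1 \<notin> I"
  shows "\<exists>P. maximal_ideal P \<and> I \<subseteq> P"
proof -
  define A where "A = {J. two_sided_ideal J \<and> I \<subseteq> J \<and> (1::'a) \<notin> J}"
  have "A \<noteq> {}" using assms unfolding A_def by blast
  moreover have "\<Union>C \<in> A" if "C \<noteq> {}" "subset.chain A C" for C
  proof -
    have CA: "C \<subseteq> A" and ch: "\<forall>X\<in>C. \<forall>Y\<in>C. X \<subseteq> Y \<or> Y \<subseteq> X" using that(2) by (auto simp: subset_chain_def)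
    have "two_sided_ideal (\<Union>C)" unfolding two_sided_ideal_def
    proof (intro conjI allI ballI impI)
      show "0 \<in> \<Union>C" using that(1) CA unfolding A_def two_sided_ideal_def by blast
    next
      fix x y assume "x \<in> \<Union>C" "y \<in> \<Union>C"
      then obtain X Y where "X \<in> C" "Y \<in> C" "x \<in> X" "y \<in> Y" by blast
      moreover have "two_sided_ideal X" "two_sided_ideal Y" using \<open>X \<in> C\<close> \<open>Y \<in> C\<close> CA unfolding A_def by auto
      ultimately have "x + y \<in> X \<or> x + y \<in> Y"
      proof -
        assume a: "X \<in> C" "Y \<in> C" "x \<in> X" "y \<in> Y" "two_sided_ideal X" "two_sided_ideal Y"
        from ch a(1,2) have "X \<subseteq> Y \<or> Y \<subseteq> X" by blast
        then show ?thesis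
        proof
          assume "X \<subseteq> Y" then show ?thesis using ideal_add[OF a(6)] a(3,4) by blast
        next
          assume "Y \<subseteq> X" then show ?thesis using ideal_add[OF a(5)] a(3,4) by blast
        qed
      qed
      then show "x + y \<in> \<Union>C" using \<open>X \<in> C\<close> \<open>Y \<in> C\<close> by blast
    next
      fix x assume "x \<in> \<Union>C" then show "- x \<in> \<Union>C" using CA unfolding A_def two_sided_ideal_def by blast
    next
      fix r x assume "x \<in> \<Union>C" then show "r * x \<in> \<Union>C" "x * r \<in> \<Union>C"
        using CA unfolding A_def two_sided_ideal_def by blast+
    qed
    then show ?thesis using that CA unfolding A_def by blast
  qed
  ultimately obtain M where M: "M \<in> A" "\<forall>X\<in>A. M \<subseteq> X \<longrightarrow> X = M"
    using subset_Zorn_nonempty[of A] by blast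
  have "maximal_ideal M" unfolding maximal_ideal_def
  proof (intro conjI allI impI)
    show "two_sided_ideal M" "M \<noteq> UNIV" using M(1) unfolding A_def by auto
  next
    fix J assume "two_sided_ideal J \<and> M \<subseteq> J \<and> J \<noteq> UNIV"
    then have "J \<in> A" using M(1) ideal_UNIV unfolding A_def by blast
    then show "J = M" using M(2) \<open>two_sided_ideal J \<and> M \<subseteq> J \<and> J \<noteq> UNIV\<close> by blast
  qed
  then show ?thesis using M(1) unfolding A_def by blast
qed

lemma left_ideal_UNIV: assumes "left_ideal I" "1 \<in> I" shows "I = UNIV"
proof -
  have "x * 1 \<in> I" for x using assms unfolding left_ideal_def by blast
  then show ?thesis by auto
qed

lemma max_left_exists:
  assumes "left_ideal I" "1 \<notin> I"
  shows "\<exists>P. maximal_left_ideal P \<and> I \<subseteq> P"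
proof -
  define A where "A = {J. left_ideal J \<and> I \<subseteq> J \<and> (1::'a) \<notin> J}"
  have "A \<noteq> {}" using assms unfolding A_def by blast
  moreover have "\<Union>C \<in> A" if "C \<noteq> {}" "subset.chain A C" for C
  proof -
    have CA: "C \<subseteq> A" and ch: "\<forall>X\<in>C. \<forall>Y\<in>C. X \<subseteq> Y \<or> Y \<subseteq> X" using that(2) by (auto simp: subset_chain_def)
    have "left_ideal (\<Union>C)" unfolding left_ideal_def
    proof (intro conjI allI ballI impI)
      show "0 \<in> \<Union>C" using that(1) CA unfolding A_def left_ideal_def by blast
    next
      fix x y assume "x \<in> \<Union>C" "y \<in> \<Union>C"
      then obtain X Y where "X \<in> C" "Y \<in> C" "x \<in> X" "y \<in> Y" by blast
      moreover have "left_ideal X" "left_ideal Y" using \<open>X \<in> C\<close> \<open>Y \<in> C\<close> CA unfolding A_def by auto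
      ultimately have "x + y \<in> X \<or> x + y \<in> Y"
      proof -
        assume a: "X \<in> C" "Y \<in> C" "x \<in> X" "y \<in> Y" "left_ideal X" "left_ideal Y"
        from ch a(1,2) have "X \<subseteq> Y \<or> Y \<subseteq> X" by blast
        then show ?thesis
        proof
          assume "X \<subseteq> Y" then show ?thesis using a(6) a(3,4) unfolding left_ideal_def by blast
        next
          assume "Y \<subseteq> X" then show ?thesis using a(5) a(3,4) unfolding left_ideal_def by blast
        qed
      qed
      then show "x + y \<in> \<Union>C" using \<open>X \<in> C\<close> \<open>Y \<in> C\<close> by blast
    next
      fix x assume "x \<in> \<Union>C" then show "- x \<in> \<Union>C" using CA unfolding A_def left_ideal_def by blast
    next
      fix r x assume "x \<in> \<Union>C" then show "r * x \<in> \<Union>C"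
        using CA unfolding A_def left_ideal_def by blast
    qed
    then show ?thesis using that CA unfolding A_def by blast
  qed
  ultimately obtain M where M: "M \<in> A" "\<forall>X\<in>A. M \<subseteq> X \<longrightarrow> X = M"
    using subset_Zorn_nonempty[of A] by blast
  have "maximal_left_ideal M" unfolding maximal_left_ideal_def
  proof (intro conjI allI impI)
    show "left_ideal M" "M \<noteq> UNIV" using M(1) unfolding A_def by auto
  next
    fix J assume "left_ideal J \<and> M \<subseteq> J \<and> J \<noteq> UNIV"
    then have "J \<in> A" using M(1) left_ideal_UNIV unfolding A_def by blast
    then show "J = M" using M(2) \<open>left_ideal J \<and> M \<subseteq> J \<and> J \<noteq> UNIV\<close> by blast
  qed
  then show ?thesis using M(1) unfolding A_def by blast
qed

section \<open>Jacobson radical\<close>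

lemma colon_max:
  assumes L: "maximal_left_ideal L" and r: "r \<notin> L"
  shows "maximal_left_ideal {y. y * r \<in> L}"
proof -
  have LL: "left_ideal L" "L \<noteq> UNIV" and Lmax: "\<And>I. left_ideal I \<Longrightarrow> L \<subseteq> I \<Longrightarrow> I \<noteq> UNIV \<Longrightarrow> I = L"
    using L unfolding maximal_left_ideal_def by auto
  have li: "left_ideal {y. y * r \<in> L}" unfolding left_ideal_def
  proof (intro conjI allI ballI impI)
    show "0 \<in> {y. y * r \<in> L}" using LL unfolding left_ideal_def by simp
  next
    fix x y assume "x \<in> {y. y * r \<in> L}" "y \<in> {y. y * r \<in> L}"
    then show "x + y \<in> {y. y * r \<in> L}" using LL unfolding left_ideal_def by (simp add: distrib_right)
  next
    fix x assume "x \<in> {y. y * r \<in> L}" then show "- x \<in> {y. y * r \<in> L}"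
      using LL unfolding left_ideal_def by simp
  next
    fix t x assume "x \<in> {y. y * r \<in> L}" then show "t * x \<in> {y. y * r \<in> L}"
      using LL unfolding left_ideal_def by (simp add: mult.assoc)
  qed
  have ne: "{y. y * r \<in> L} \<noteq> UNIV"
  proof
    assume "{y. y * r \<in> L} = UNIV"
    then have "1 * r \<in> L" by blast
    then show False using r by simp
  qed
  have "I = {y. y * r \<in> L}" if I: "left_ideal I" "{y. y * r \<in> L} \<subseteq> I" "I \<noteq> UNIV" for I
  proof (rule ccontr)
    assume "I \<noteq> {y. y * r \<in> L}"
    then obtain y where y: "y \<in> I" "y * r \<notin> L" using I(2) by blast
    define S where "S = {l + t * (y * r) | l t. l \<in> L}"
    have liS: "left_ideal S" unfolding left_ideal_def S_def
    proof (intro conjI allI ballI impI)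
      have "(0::'a) = 0 + 0 * (y * r)" by simp
      moreover have "(0::'a) \<in> L" using LL unfolding left_ideal_def by blast
      ultimately show "0 \<in> {l + t * (y * r) |l t. l \<in> L}" by blast
    next
      fix a b assume "a \<in> {l + t * (y * r) |l t. l \<in> L}" "b \<in> {l + t * (y * r) |l t. l \<in> L}"
      then obtain l t l' t' where "a = l + t * (y * r)" "b = l' + t' * (y * r)" "l \<in> L" "l' \<in> L" by blast
      moreover have "a + b = (l + l') + (t + t') * (y * r)" using calculation by (simp add: algebra_simps)
      ultimately show "a + b \<in> {l + t * (y * r) |l t. l \<in> L}" using LL unfolding left_ideal_def by blast
    next
      fix a assume "a \<in> {l + t * (y * r) |l t. l \<in> L}"
      then obtain l t where "a = l + t * (y * r)" "l \<in> L" by blast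
      moreover have "- a = (- l) + (- t) * (y * r)" using calculation by (simp add: algebra_simps)
      ultimately show "- a \<in> {l + t * (y * r) |l t. l \<in> L}" using LL unfolding left_ideal_def by blast
    next
      fix c a assume "a \<in> {l + t * (y * r) |l t. l \<in> L}"
      then obtain l t where "a = l + t * (y * r)" "l \<in> L" by blast
      moreover have "c * a = c * l + (c * t) * (y * r)" using calculation by (simp add: algebra_simps)
      ultimately show "c * a \<in> {l + t * (y * r) |l t. l \<in> L}" using LL unfolding left_ideal_def by blast
    qed
    have LS: "L \<subseteq> S"
    proof
      fix l assume "l \<in> L"
      moreover have "l = l + 0 * (y * r)" by simp
      ultimately show "l \<in> S" unfolding S_def by blast
    qed
    have "y * r = 0 + 1 * (y * r)" by simp
    moreover have "(0::'a) \<in> L" using LL unfolding left_ideal_def by blast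
    ultimately have "y * r \<in> S" unfolding S_def by blast
    then have "S \<noteq> L" using y by blast
    then have "S = UNIV" using Lmax[OF liS LS] by blast
    then have "r \<in> S" by simp
    then obtain l z where lz: "r = l + z * (y * r)" "l \<in> L" unfolding S_def by blast
    have "(1 - z * y) * r = l" using lz(1) by (simp add: algebra_simps)
    then have "1 - z * y \<in> I" using lz(2) I(2) by auto
    moreover have "z * y \<in> I" using I(1) y(1) unfolding left_ideal_def by blast
    ultimately have "(1 - z * y) + z * y \<in> I" using I(1) unfolding left_ideal_def by blast
    then have "1 \<in> I" by simp
    then show False using I(3) left_ideal_UNIV[OF I(1)] by blast
  qed
  then show ?thesis using li ne unfolding maximal_left_ideal_def by blast
qed

lemma jac_right: assumes "z \<in> jacobson" shows "z * r \<in> jacobson"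
  unfolding jacobson_def
proof
  fix L :: "'a set" assume "L \<in> {M. maximal_left_ideal M}"
  then have L: "maximal_left_ideal L" by simp
  then have LL: "left_ideal L" unfolding maximal_left_ideal_def by simp
  show "z * r \<in> L"
  proof (cases "r \<in> L")
    case True then show ?thesis using LL unfolding left_ideal_def by blast
  next
    case False
    then have "maximal_left_ideal {y. y * r \<in> L}" by (rule colon_max[OF L])
    then have "z \<in> {y. y * r \<in> L}" using assms unfolding jacobson_def by blast
    then show ?thesis by simp
  qed
qed

lemma jac_ideal: "two_sided_ideal (jacobson :: 'a::ring_1 set)"
proof -
  have "\<And>L::'a set. L \<in> {M. maximal_left_ideal M} \<Longrightarrow> left_ideal L" unfolding maximal_left_ideal_def by simp
  then have "left_ideal (jacobson :: 'a set)" unfolding jacobson_def left_ideal_def by blast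
  then show ?thesis using jac_right unfolding two_sided_ideal_def left_ideal_def by blast
qed

lemma jac_sub: assumes P: "maximal_ideal P" shows "jacobson \<subseteq> P"
proof -
  have PP: "two_sided_ideal P" "P \<noteq> UNIV" and Pmax: "\<And>I. two_sided_ideal I \<Longrightarrow> P \<subseteq> I \<Longrightarrow> I \<noteq> UNIV \<Longrightarrow> I = P"
    using P unfolding maximal_ideal_def by auto
  have "left_ideal P" using PP(1) unfolding two_sided_ideal_def left_ideal_def by blast
  moreover have "1 \<notin> P" using PP ideal_UNIV by blast
  ultimately obtain L where L: "maximal_left_ideal L" "P \<subseteq> L" using max_left_exists by blast
  have LL: "left_ideal L" "L \<noteq> UNIV" using L(1) unfolding maximal_left_ideal_def by auto
  define core where "core = {z. \<forall>r. z * r \<in> L}"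
  have ci: "two_sided_ideal core" unfolding two_sided_ideal_def core_def
  proof (intro conjI allI ballI impI)
    show "0 \<in> {z. \<forall>r. z * r \<in> L}" using LL unfolding left_ideal_def by simp
  next
    fix x y assume "x \<in> {z. \<forall>r. z * r \<in> L}" "y \<in> {z. \<forall>r. z * r \<in> L}"
    then show "x + y \<in> {z. \<forall>r. z * r \<in> L}" using LL unfolding left_ideal_def by (simp add: distrib_right)
  next
    fix x assume "x \<in> {z. \<forall>r. z * r \<in> L}" then show "- x \<in> {z. \<forall>r. z * r \<in> L}"
      using LL unfolding left_ideal_def by simp
  next
    fix t x assume "x \<in> {z. \<forall>r. z * r \<in> L}" then show "t * x \<in> {z. \<forall>r. z * r \<in> L}" "x * t \<in> {z. \<forall>r. z * r \<in> L}"
      using LL unfolding left_ideal_def by (simp_all add: mult.assoc)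
  qed
  have "P \<subseteq> core" unfolding core_def using PP(1) L(2) ideal_rm by blast
  moreover have "core \<noteq> UNIV"
  proof
    assume "core = UNIV"
    then have "1 * 1 \<in> L" unfolding core_def by blast
    then show False using LL left_ideal_UNIV[OF LL(1)] by simp
  qed
  ultimately have cP: "core = P" using Pmax ci by blast
  have "jacobson \<subseteq> L" using L(1) unfolding jacobson_def by blast
  then have "jacobson \<subseteq> core" unfolding core_def using jac_right by blast
  then show ?thesis using cP by simp
qed

section \<open>Primeness\<close>

lemma RuR_prod:
  assumes P: "two_sided_ideal P" and xy: "\<forall>t. x * t * y \<in> P" and e: "e \<in> RuR x" and f: "f \<in> RuR y"
  shows "e * t * f \<in> P"
proof -
  obtain m :: nat and c d where fd: "f = (\<Sum>i<m. c i * y * d i)" using f unfolding RuR_def by blast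
  have xf: "x * t' * f \<in> P" for t'
  proof -
    have "x * t' * f = (\<Sum>i<m. (x * (t' * c i) * y) * d i)" unfolding fd
      by (simp add: sum_distrib_left mult.assoc)
    also have "\<dots> \<in> P" using xy P by (intro ideal_sum_mem[OF P]) (simp add: ideal_rm)
    finally show ?thesis .
  qed
  obtain n :: nat and a b where ed: "e = (\<Sum>i<n. a i * x * b i)" using e unfolding RuR_def by blast
  have "e * t * f = (\<Sum>i<n. a i * (x * (b i * t) * f))" unfolding ed
    by (simp add: sum_distrib_right mult.assoc)
  also have "\<dots> \<in> P" using xf P by (intro ideal_sum_mem[OF P]) (simp add: ideal_lm)
  finally show ?thesis .
qed

lemma prime_max:
  assumes P: "maximal_ideal P" and xy: "\<forall>t. x * t * y \<in> P" and x: "x \<notin> P"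
  shows "y \<in> P"
proof -
  have PP: "two_sided_ideal P" "P \<noteq> UNIV" and Pmax: "\<And>I. two_sided_ideal I \<Longrightarrow> P \<subseteq> I \<Longrightarrow> I \<noteq> UNIV \<Longrightarrow> I = P"
    using P unfolding maximal_ideal_def by auto
  have si: "two_sided_ideal (isum P (RuR x))" using isum_ideal[OF PP(1) RuR_ideal] .
  have "x \<in> isum P (RuR x)" using isum_sub2[OF PP(1)] RuR_mem by blast
  then have "isum P (RuR x) \<noteq> P" using x by blast
  then have "isum P (RuR x) = UNIV" using Pmax[OF si isum_sub1[OF RuR_ideal]] by blast
  then obtain p q where pq: "1 = p + q" "p \<in> P" "q \<in> RuR x" unfolding isum_def by blast
  have "q * 1 * y \<in> P" using RuR_prod[OF PP(1) xy pq(3) RuR_mem] .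
  moreover have "p * y \<in> P" using pq(2) PP(1) ideal_rm by blast
  ultimately have "p * y + q * y \<in> P" using PP(1) ideal_add by simp
  moreover have "y = p * y + q * y" by (simp add: distrib_right[symmetric] pq(1)[symmetric])
  ultimately show ?thesis by simp
qed

lemma max_ideal: "maximal_ideal P \<Longrightarrow> two_sided_ideal P"
  unfolding maximal_ideal_def by simp

lemma max_one: "maximal_ideal P \<Longrightarrow> 1 \<notin> P"
  unfolding maximal_ideal_def using ideal_UNIV by blast

lemma Vset_RuR: "Vset (RuR x) = {P. maximal_ideal P \<and> x \<in> P}"
  unfolding Vset_def MaxSpec_def
  using RuR_mem RuR_sub max_ideal by blast

lemma closed_RuR: "max_closed (Vset (RuR x))"
  unfolding max_closed_def using RuR_ideal by blast

lemma notboth: assumes "maximal_ideal P" "e \<in> P" "1 - e \<in> P" shows False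
proof -
  have "e + (1 - e) \<in> P" using assms ideal_add max_ideal by blast
  then show False using max_one[OF assms(1)] by simp
qed

lemma idem_split: assumes P: "maximal_ideal P" and e: "\<forall>r. e * r * (1 - e) \<in> jacobson"
  shows "e \<in> P \<or> 1 - e \<in> P"
proof -
  have "\<forall>t. e * t * (1 - e) \<in> P" using e jac_sub[OF P] by blast
  then show ?thesis using prime_max[OF P] by blast
qed

lemma full_notin: assumes "full u" "maximal_ideal P" shows "u \<notin> P"
proof
  assume "u \<in> P"
  then have "RuR u \<subseteq> P" using RuR_sub max_ideal[OF assms(2)] by blast
  then have "1 \<in> P" using assms(1) unfolding full_def by blast
  then show False using max_one[OF assms(2)] by blast
qed

lemma not_full: assumes "\<not> full u" shows "\<exists>P. maximal_ideal P \<and> u \<in> P"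
proof -
  have "1 \<notin> RuR u" using assms ideal_UNIV[OF RuR_ideal] unfolding full_def by blast
  then obtain P where "maximal_ideal P" "RuR u \<subseteq> P" using max_ideal_exists[OF RuR_ideal] by blast
  then show ?thesis using RuR_mem by blast
qed

lemma comax:
  assumes I: "two_sided_ideal I" and K: "two_sided_ideal K" and d: "Vset I \<inter> Vset K = {}"
  shows "\<exists>i\<in>I. \<exists>k\<in>K. i + k = 1"
proof (rule ccontr)
  assume "\<not> (\<exists>i\<in>I. \<exists>k\<in>K. i + k = 1)"
  then have "1 \<notin> isum I K" unfolding isum_def by auto
  then obtain P where P: "maximal_ideal P" "isum I K \<subseteq> P" using max_ideal_exists[OF isum_ideal[OF I K]] by blast
  have "I \<subseteq> P" "K \<subseteq> P" using P(2) isum_sub1[OF K] isum_sub2[OF I] by blast+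
  then have "P \<in> Vset I \<inter> Vset K" using P(1) unfolding Vset_def MaxSpec_def by blast
  then show False using d by blast
qed

theorem corollary3p7:
  assumes "\<forall>a b :: 'a::ring_1. a + b = 1 \<longrightarrow>
             (\<exists>r s. \<forall>t. (1 + a * r) * t * (1 + b * s) \<in> (jacobson :: 'a set))"
  shows "feckly_clean_ring TYPE('a) \<longleftrightarrow> Max_strongly_zero_dim TYPE('a)"
proof
  assume fc: "feckly_clean_ring TYPE('a)"
  show "Max_strongly_zero_dim TYPE('a)"
    unfolding Max_strongly_zero_dim_def
  proof (intro allI impI)
    fix A B :: "'a set set"
    assume h: "max_closed A \<and> max_closed B \<and> A \<inter> B = {}"
    obtain I where I: "two_sided_ideal I" "A = Vset I" using h unfolding max_closed_def by blast
    obtain K where K: "two_sided_ideal K" "B = Vset K" using h unfolding max_closed_def by blast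
    obtain i k where ik: "i \<in> I" "k \<in> K" "i + k = 1" using comax[OF I(1) K(1)] h I(2) K(2) by blast
    obtain e u where eu: "i = e + u" "full u" "\<forall>r. e * r * (1 - e) \<in> jacobson"
      using fc unfolding feckly_clean_ring_def feckly_clean_elem_def by blast
    define C1 where "C1 = Vset (RuR (1 - e))"
    define C2 where "C2 = Vset (RuR e)"
    have C1e: "C1 = {P. maximal_ideal P \<and> 1 - e \<in> P}" and C2e: "C2 = {P. maximal_ideal P \<and> e \<in> P}"
      unfolding C1_def C2_def Vset_RuR by auto
    have split: "e \<in> P \<or> 1 - e \<in> P" if "maximal_ideal P" for P using idem_split[OF that eu(3)] .
    have nb: "\<not> (e \<in> P \<and> 1 - e \<in> P)" if "maximal_ideal P" for P using notboth[OF that] by blast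
    have comp1: "MaxSpec - C1 = C2" and comp2: "MaxSpec - C2 = C1"
      unfolding C1e C2e MaxSpec_def using split nb by auto
    have cl: "max_closed C1" "max_closed C2" by (simp_all add: C1_def C2_def closed_RuR)
    have "max_clopen C1" "max_clopen C2" using cl by (simp_all add: max_clopen_def comp1 comp2)
    moreover have "C1 \<inter> C2 = {}" unfolding C1e C2e using notboth by blast
    moreover have "A \<subseteq> C1"
    proof
      fix P assume "P \<in> A"
      then have P: "maximal_ideal P" "i \<in> P" using I ik(1) unfolding Vset_def MaxSpec_def by auto
      have "1 - e \<in> P"
      proof (rule ccontr)
        assume "1 - e \<notin> P"
        then have "e \<in> P" using idem_split[OF P(1) eu(3)] by blast
        then have "i - e \<in> P" using P ideal_diff max_ideal by blast
        then show False using full_notin[OF eu(2) P(1)] eu(1) by simp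
      qed
      then show "P \<in> C1" unfolding C1e using P by blast
    qed
    moreover have "B \<subseteq> C2"
    proof
      fix P assume "P \<in> B"
      then have P: "maximal_ideal P" "k \<in> P" using K ik(2) unfolding Vset_def MaxSpec_def by auto
      have "e \<in> P"
      proof (rule ccontr)
        assume "e \<notin> P"
        then have "1 - e \<in> P" using idem_split[OF P(1) eu(3)] by blast
        then have "(1 - e) - k \<in> P" using P ideal_diff max_ideal by blast
        moreover have "(1 - e) - k = u" using eu(1) ik(3) by (simp add: algebra_simps)
        ultimately show False using full_notin[OF eu(2) P(1)] by simp
      qed
      then show "P \<in> C2" unfolding C2e using P by blast
    qed
    ultimately show "\<exists>C1 C2. max_clopen C1 \<and> max_clopen C2 \<and> C1 \<inter> C2 = {} \<and> A \<subseteq> C1 \<and> B \<subseteq> C2"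
      by blast
  qed
next
  assume sz: "Max_strongly_zero_dim TYPE('a)"
  show "feckly_clean_ring TYPE('a)" unfolding feckly_clean_ring_def feckly_clean_elem_def
  proof
    fix a :: 'a
    define A where "A = Vset (RuR a)"
    define B where "B = Vset (RuR (1 - a))"
    have "A \<inter> B = {}" unfolding A_def B_def Vset_RuR using notboth by blast
    moreover have "max_closed A" "max_closed B" unfolding A_def B_def by (rule closed_RuR)+
    ultimately obtain C1 C2 where C: "max_clopen C1" "max_clopen C2" "C1 \<inter> C2 = {}" "A \<subseteq> C1" "B \<subseteq> C2"
      using sz unfolding Max_strongly_zero_dim_def by blast
    obtain I K where IK: "two_sided_ideal I" "C1 = Vset I" "two_sided_ideal K" "MaxSpec - C1 = Vset K"
      using C(1) unfolding max_clopen_def max_closed_def by blast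
    have "Vset I \<inter> Vset K = {}" using IK(2) IK(4) by auto
    then obtain i k where ik: "i \<in> I" "k \<in> K" "i + k = 1" using comax IK by blast
    obtain r s where rs: "\<forall>t. (1 + i * r) * t * (1 + k * s) \<in> jacobson" using assms ik(3) by blast
    define x where "x = 1 + i * r"
    define y where "y = 1 + k * s"
    have xj: "\<forall>t. x * t * y \<in> jacobson" using rs unfolding x_def y_def .
    have xI: "x \<notin> P" if "P \<in> C1" for P
    proof
      assume "x \<in> P"
      have P: "maximal_ideal P" "I \<subseteq> P" using that IK(2) unfolding Vset_def MaxSpec_def by auto
      have "i * r \<in> P" using P ik(1) ideal_rm max_ideal by blast
      then have "x - i * r \<in> P" using \<open>x \<in> P\<close> P ideal_diff max_ideal by blast
      then show False using max_one[OF P(1)] unfolding x_def by simp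
    qed
    have yK: "y \<notin> P" if "P \<in> MaxSpec" "P \<notin> C1" for P
    proof
      assume "y \<in> P"
      have P: "maximal_ideal P" "K \<subseteq> P" using that IK(4) unfolding Vset_def MaxSpec_def by auto
      have "k * s \<in> P" using P ik(2) ideal_rm max_ideal by blast
      then have "y - k * s \<in> P" using \<open>y \<in> P\<close> P ideal_diff max_ideal by blast
      then show False using max_one[OF P(1)] unfolding y_def by simp
    qed
    have xyP: "\<forall>t. x * t * y \<in> P" if "maximal_ideal P" for P using xj jac_sub[OF that] by blast
    have "\<exists>e\<in>RuR x. \<exists>f\<in>RuR y. e + f = 1"
    proof (rule ccontr)
      assume "\<not> (\<exists>e\<in>RuR x. \<exists>f\<in>RuR y. e + f = 1)"
      then have "1 \<notin> isum (RuR x) (RuR y)" unfolding isum_def by auto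
      then obtain P where P: "maximal_ideal P" "isum (RuR x) (RuR y) \<subseteq> P"
        using max_ideal_exists[OF isum_ideal[OF RuR_ideal RuR_ideal]] by blast
      have "x \<in> P" using P(2) subsetD[OF isum_sub1[OF RuR_ideal[of y]] RuR_mem[of x]] by (rule subsetD)
      moreover have "y \<in> P" using P(2) subsetD[OF isum_sub2[OF RuR_ideal[of x]] RuR_mem[of y]] by (rule subsetD)
      moreover have "P \<in> MaxSpec" using P(1) unfolding MaxSpec_def by simp
      ultimately show False using xI yK by blast
    qed
    then obtain e f where ef: "e \<in> RuR x" "f \<in> RuR y" "e + f = 1" by blast
    have f: "f = 1 - e" using ef(3) by (simp add: algebra_simps)
    show "\<exists>e u. a = e + u \<and> full u \<and> (\<forall>r. e * r * (1 - e) \<in> jacobson)"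
    proof (intro exI conjI)
      show "a = e + (a - e)" by simp
      show "\<forall>r. e * r * (1 - e) \<in> jacobson" using RuR_prod[OF jac_ideal xj ef(1) ef(2)] f by blast
      show "full (a - e)"
      proof (rule ccontr)
        assume "\<not> full (a - e)"
        then obtain P where P: "maximal_ideal P" "a - e \<in> P" using not_full by blast
        have PM: "P \<in> MaxSpec" using P(1) unfolding MaxSpec_def by simp
        have PI: "two_sided_ideal P" using max_ideal[OF P(1)] .
        show False
        proof (cases "P \<in> C1")
          case True
          then have "x \<notin> P" using xI by blast
          then have "y \<in> P" using prime_max[OF P(1) xyP[OF P(1)]] by blast
          then have "RuR y \<subseteq> P" using RuR_sub PI by blast
          then have "1 - e \<in> P" using ef(2) f by blast
          then have "(1 - e) - (a - e) \<in> P" using P(2) PI ideal_diff by blast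
          then have "1 - a \<in> P" by simp
          then have "P \<in> B" unfolding B_def Vset_RuR using P(1) by blast
          then show False using C(3) C(5) True by blast
        next
          case False
          then have "y \<notin> P" using yK PM by blast
          then have "x \<in> P" using prime_max[OF P(1) xyP[OF P(1)]] by blast
          then have "RuR x \<subseteq> P" using RuR_sub PI by blast
          then have "e \<in> P" using ef(1) by blast
          then have "(a - e) + e \<in> P" using P(2) PI ideal_add by blast
          then have "a \<in> P" by simp
          then have "P \<in> A" unfolding A_def Vset_RuR using P(1) by blast
          then show False using C(4) False by blast
        qed
      qed
    qed
  qed
qed

end
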